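(* Let $\epsilon_1,\epsilon_2,\epsilon_3,\epsilon_4\in\{\pm1\}$, let $\Lambda(x)$ and ${}^v\Lambda(x,y^4)$ be smooth functions of $x=(x^1,x^2)$, resp. $(x,y^4)$, and let $\widetilde\Lambda_0\neq0$ be a constant. Let $\tilde\Phi(x,y^4)>0$ be smooth with $\partial_4\tilde\Phi\neq0$, and let $\Xi(x,y^4)$ satisfy $\partial_4\Xi={}^v\Lambda\,\partial_4(\tilde\Phi^2)$ with $\Xi\neq0$ and $\partial_4\Xi\neq0$ everywhere. Let $\psi(x)$ be any solution of $\epsilon_1\partial^2_{11}\psi+\epsilon_2\partial^2_{22}\psi=2\Lambda(x)$, and let ${}_1n_k(x)$, ${}_2\tilde n_k(x)$ ($k=1,2$) be arbitrary smooth functions. Define $$h_3=\frac{\tilde\Phi^2}{4\widetilde\Lambda_0},\quad h_4=\frac{(\partial_4\tilde\Phi)^2}{\Xi},\quad n_k={}_1n_k+{}_2\tilde n_k\int\frac{(\partial_4\tilde\Phi)^2}{\tilde\Phi^3\,\Xi}\,dy^4,\quad w_i=\frac{\partial_i\Xi}{\partial_4\Xi}.$$ Then $(\psi,h_3,h_4,n_k,w_i)$ solves the system $$\epsilon_1\partial^2_{11}\psi+\epsilon_2\partial^2_{22}\psi=2\Lambda,\quad (\partial_4\phi)(\partial_4h_3)=2h_3h_4\,{}^v\Lambda,\quad \partial^2_{44}n_i+\gamma\,\partial_4n_i=0,\quad \beta w_i-\alpha_i=0,$$ where $\phi=\ln|\partial_4h_3/\sqrt{|h_3h_4|}|$, $\gamma=\partial_4\ln(|h_3|^{3/2}/|h_4|)$,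 $\alpha_i=(\partial_i\phi)(\partial_4h_3)/(2h_3)$, $\beta=(\partial_4\phi)(\partial_4h_3)/(2h_3)$. Consequently the metric $$ds^2=\epsilon_ie^{\psi}(dx^i)^2+\frac{\tilde\Phi^2}{4\widetilde\Lambda_0}\Big[dy^3+n_k dx^k\Big]^2+\frac{(\partial_4\tilde\Phi)^2}{\Xi}\Big[dy^4+\frac{\partial_i\Xi}{\partial_4\Xi}dx^i\Big]^2$$ is a generic off-diagonal solution, with Killing symmetry $\partial/\partial y^3$, of the decoupled 4-d nonholonomic Einstein equations for the canonical d-connection with sources $\Lambda$, ${}^v\Lambda$.
   Context: Coordinates $(x^1,x^2,y^3,y^4)$, $\partial_i=\partial/\partial x^i$, $\partial_4=\partial/\partial y^4$; summation over $i,k=1,2$. $\int\cdot\,dy^4$ denotes any antiderivative with respect to $y^4$ (with $x$ fixed). The "decoupled 4-d nonholonomic Einstein equations" are exactly the displayed system of four equations for the metric $ds^2=\epsilon_ie^\psi(dx^i)^2+h_3(dy^3+n_kdx^k)^2+h_4(dy^4+w_idx^i)^2$ with $h_a,n_k,w_i$ functions of $(x,y^4)$. *)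

theory Defs
  imports "HOL-Analysis.Analysis"
begin

text \<open>Functions on coordinates (x1, x2, y4) are curried: f x1 x2 y4.
  The coordinate y3 does not appear (Killing symmetry along y3).\<close>

definition pd1 :: "(real \<Rightarrow> real \<Rightarrow> real \<Rightarrow> real) \<Rightarrow> real \<Rightarrow> real \<Rightarrow> real \<Rightarrow> real" where
  "pd1 f = (\<lambda>a b c. deriv (\<lambda>t. f t b c) a)"

definition pd2 :: "(real \<Rightarrow> real \<Rightarrow> real \<Rightarrow> real) \<Rightarrow> real \<Rightarrow> real \<Rightarrow> real \<Rightarrow> real" where
  "pd2 f = (\<lambda>a b c. deriv (\<lambda>t. f a t c) b)"

definition pd4 :: "(real \<Rightarrow> real \<Rightarrow> real \<Rightarrow> real) \<Rightarrow> real \<Rightarrow> real \<Rightarrow> real \<Rightarrow> real" where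
  "pd4 f = (\<lambda>a b c. deriv (\<lambda>t. f a b t) c)"

definition pdx :: "nat \<Rightarrow> (real \<Rightarrow> real \<Rightarrow> real \<Rightarrow> real) \<Rightarrow> real \<Rightarrow> real \<Rightarrow> real \<Rightarrow> real" where
  "pdx i f = (if i = 1 then pd1 f else pd2 f)"

text \<open>Smoothness (C-infinity) on R^3: continuous, all first partials exist everywhere,
  and the partials are again smooth.\<close>
coinductive smooth3 :: "(real \<Rightarrow> real \<Rightarrow> real \<Rightarrow> real) \<Rightarrow> bool" where
  "\<lbrakk> continuous_on UNIV (\<lambda>p. f (fst p) (fst (snd p)) (snd (snd p)));
     \<forall>a b c. (\<lambda>t. f t b c) differentiable (at a);
     \<forall>a b c. (\<lambda>t. f a t c) differentiable (at b);
     \<forall>a b c. (\<lambda>t. f a b t) differentiable (at c);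
     smooth3 (pd1 f); smooth3 (pd2 f); smooth3 (pd4 f) \<rbrakk> \<Longrightarrow> smooth3 f"

definition nh_phi where
  "nh_phi h3 h4 = (\<lambda>a b c. ln \<bar>pd4 h3 a b c / sqrt \<bar>h3 a b c * h4 a b c\<bar>\<bar>)"

definition nh_gamma where
  "nh_gamma h3 h4 = pd4 (\<lambda>a b c. ln (\<bar>h3 a b c\<bar> powr (3/2) / \<bar>h4 a b c\<bar>))"

definition nh_alpha where
  "nh_alpha h3 h4 i = (\<lambda>a b c. pdx i (nh_phi h3 h4) a b c * pd4 h3 a b c / (2 * h3 a b c))"

definition nh_beta where
  "nh_beta h3 h4 = (\<lambda>a b c. pd4 (nh_phi h3 h4) a b c * pd4 h3 a b c / (2 * h3 a b c))"

definition decoupled_system ::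
  "real \<Rightarrow> real \<Rightarrow> (real \<Rightarrow> real \<Rightarrow> real) \<Rightarrow> (real \<Rightarrow> real \<Rightarrow> real \<Rightarrow> real)
   \<Rightarrow> (real \<Rightarrow> real \<Rightarrow> real)
   \<Rightarrow> (real \<Rightarrow> real \<Rightarrow> real \<Rightarrow> real) \<Rightarrow> (real \<Rightarrow> real \<Rightarrow> real \<Rightarrow> real)
   \<Rightarrow> (nat \<Rightarrow> real \<Rightarrow> real \<Rightarrow> real \<Rightarrow> real) \<Rightarrow> (nat \<Rightarrow> real \<Rightarrow> real \<Rightarrow> real \<Rightarrow> real) \<Rightarrow> bool" where
  "decoupled_system eps1 eps2 Lam vLam psi h3 h4 n w \<longleftrightarrow>
     (\<forall>a b. eps1 * deriv (\<lambda>t. deriv (\<lambda>s. psi s b) t) a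
            + eps2 * deriv (\<lambda>t. deriv (\<lambda>s. psi a s) t) b = 2 * Lam a b)
   \<and> (\<forall>a b c. pd4 (nh_phi h3 h4) a b c * pd4 h3 a b c = 2 * h3 a b c * h4 a b c * vLam a b c)
   \<and> (\<forall>i\<in>{1,2}. \<forall>a b c. pd4 (pd4 (n i)) a b c + nh_gamma h3 h4 a b c * pd4 (n i) a b c = 0)
   \<and> (\<forall>i\<in>{1,2}. \<forall>a b c. nh_beta h3 h4 a b c * w i a b c - nh_alpha h3 h4 i a b c = 0)"

end

theory Submission
  imports Defs
begin

lemma s3_d4: "smooth3 f \<Longrightarrow> ((\<lambda>t. f a b t) has_real_derivative pd4 f a b c) (at c)"
  by (erule smooth3.cases) (simp add: pd4_def DERIV_deriv_iff_real_differentiable)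
lemma s3_d1: "smooth3 f \<Longrightarrow> ((\<lambda>t. f t b c) has_real_derivative pd1 f a b c) (at a)"
  by (erule smooth3.cases) (simp add: pd1_def DERIV_deriv_iff_real_differentiable)
lemma s3_d2: "smooth3 f \<Longrightarrow> ((\<lambda>t. f a t c) has_real_derivative pd2 f a b c) (at b)"
  by (erule smooth3.cases) (simp add: pd2_def DERIV_deriv_iff_real_differentiable)
lemma s3_pd4: "smooth3 f \<Longrightarrow> smooth3 (pd4 f)"
  by (erule smooth3.cases) simp

lemma ln_sq_deriv:
  assumes "(g has_real_derivative g') (at x)" "g x \<noteq> 0"
  shows "((\<lambda>t. ln ((g t)\<^sup>2)) has_real_derivative 2 * g' / g x) (at x)"
proof -
  have "((\<lambda>t. ln ((g t)\<^sup>2)) has_real_derivative inverse ((g x)\<^sup>2) * (2 * g x ^ 1 * g')) (at x)"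
    using DERIV_chain2[OF DERIV_ln[of "(g x)^2"] DERIV_power[OF assms(1), of 2]] assms(2) by (simp add: mult_ac)
  moreover have "inverse ((g x)\<^sup>2) * (2 * g x ^ 1 * g') = 2 * g' / g x"
    using assms(2) by (simp add: field_simps power2_eq_square)
  ultimately show ?thesis by simp
qed

lemma ln_abs_sq: "ln \<bar>x\<bar> = ln ((x::real)\<^sup>2) / 2"
  by (cases "x \<ge> 0") (simp_all add: ln_realpow ln_minus)

theorem theorem3p2:
  fixes eps1 eps2 eps3 eps4 Lam0 :: real
    and Lam :: "real \<Rightarrow> real \<Rightarrow> real"
    and psi :: "real \<Rightarrow> real \<Rightarrow> real"
    and vLam Phi Xi A :: "real \<Rightarrow> real \<Rightarrow> real \<Rightarrow> real"
    and n1 n2 :: "nat \<Rightarrow> real \<Rightarrow> real \<Rightarrow> real"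
  assumes eps: "eps1 \<in> {1, -1}" "eps2 \<in> {1, -1}" "eps3 \<in> {1, -1}" "eps4 \<in> {1, -1}"
    and smooth_Lam: "smooth3 (\<lambda>a b c. Lam a b)"
    and smooth_vLam: "smooth3 vLam"
    and Lam0: "Lam0 \<noteq> 0"
    and smooth_Phi: "smooth3 Phi"
    and Phi_pos: "\<forall>a b c. Phi a b c > 0"
    and Phi_d4: "\<forall>a b c. pd4 Phi a b c \<noteq> 0"
    and smooth_Xi: "smooth3 Xi"
    and Xi_eq: "\<forall>a b c. pd4 Xi a b c = vLam a b c * pd4 (\<lambda>a b c. (Phi a b c)\<^sup>2) a b c"
    and Xi_nz: "\<forall>a b c. Xi a b c \<noteq> 0"
    and Xi_d4: "\<forall>a b c. pd4 Xi a b c \<noteq> 0"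
    and psi_sol: "\<forall>a b. eps1 * deriv (\<lambda>t. deriv (\<lambda>s. psi s b) t) a
                     + eps2 * deriv (\<lambda>t. deriv (\<lambda>s. psi a s) t) b = 2 * Lam a b"
    and smooth_n1: "\<forall>k\<in>{1,2}. smooth3 (\<lambda>a b c. n1 k a b)"
    and smooth_n2: "\<forall>k\<in>{1,2}. smooth3 (\<lambda>a b c. n2 k a b)"
    and A_antider: "\<forall>a b c. ((\<lambda>t. A a b t) has_real_derivative
                        ((pd4 Phi a b c)\<^sup>2 / ((Phi a b c) ^ 3 * Xi a b c))) (at c)"
  shows "decoupled_system eps1 eps2 Lam vLam psi
           (\<lambda>a b c. (Phi a b c)\<^sup>2 / (4 * Lam0))
           (\<lambda>a b c. (pd4 Phi a b c)\<^sup>2 / Xi a b c)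
           (\<lambda>k a b c. n1 k a b + n2 k a b * A a b c)
           (\<lambda>i a b c. pdx i Xi a b c / pd4 Xi a b c)"
proof -
  define h3 where "h3 = (\<lambda>a b c. (Phi a b c)\<^sup>2 / (4 * Lam0))"
  define h4 where "h4 = (\<lambda>a b c. (pd4 Phi a b c)\<^sup>2 / Xi a b c)"
  have dP: "\<And>a b c. ((\<lambda>t. Phi a b t) has_real_derivative pd4 Phi a b c) (at c)"
    using s3_d4[OF smooth_Phi] .
  have dP1: "\<And>a b c. ((\<lambda>t. pd4 Phi a b t) has_real_derivative pd4 (pd4 Phi) a b c) (at c)"
    using s3_d4[OF s3_pd4[OF smooth_Phi]] .
  have dX: "\<And>a b c. ((\<lambda>t. Xi a b t) has_real_derivative pd4 Xi a b c) (at c)"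
    using s3_d4[OF smooth_Xi] .
  have dX1: "\<And>a b c. ((\<lambda>t. Xi t b c) has_real_derivative pd1 Xi a b c) (at a)"
    using s3_d1[OF smooth_Xi] .
  have dX2: "\<And>a b c. ((\<lambda>t. Xi a t c) has_real_derivative pd2 Xi a b c) (at b)"
    using s3_d2[OF smooth_Xi] .
  have Pnz: "\<And>a b c. Phi a b c \<noteq> 0" using Phi_pos by (metis less_irrefl)
  have h3d: "pd4 h3 a b c = Phi a b c * pd4 Phi a b c / (2 * Lam0)" for a b c
  proof -
    have "((\<lambda>t. h3 a b t) has_real_derivative 2 * Phi a b c * pd4 Phi a b c / (4 * Lam0)) (at c)"
      unfolding h3_def using DERIV_cdivide[OF DERIV_power[OF dP[of a b c], of 2], of "4*Lam0"]
      by (simp add: mult_ac)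
    then show ?thesis unfolding pd4_def by (simp add: DERIV_imp_deriv)
  qed
  have Phi2d: "pd4 (\<lambda>a b c. (Phi a b c)\<^sup>2) a b c = 2 * Phi a b c * pd4 Phi a b c" for a b c
    unfolding pd4_def using DERIV_power[OF dP[of a b c], of 2]
    by (simp add: DERIV_imp_deriv mult_ac pd4_def)
  have phi_eq: "nh_phi h3 h4 = (\<lambda>a b c. ln ((Xi a b c)\<^sup>2) / 4 - ln \<bar>Lam0\<bar> / 2)"
  proof (intro ext)
    fix a b c
    define u where "u = Phi a b c * pd4 Phi a b c / (2 * Lam0)"
    define v where "v = h3 a b c * h4 a b c"
    have unz: "u \<noteq> 0" using Pnz Phi_d4 Lam0 by (simp add: u_def)
    have "\<bar>v\<bar> = u\<^sup>2 * (\<bar>Lam0\<bar> / \<bar>Xi a b c\<bar>)"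
      using Lam0 Xi_nz unfolding u_def v_def h3_def h4_def
      by (simp add: abs_mult power2_eq_square field_simps)
    then have "sqrt \<bar>v\<bar> = \<bar>u\<bar> * sqrt (\<bar>Lam0\<bar> / \<bar>Xi a b c\<bar>)"
      by (metis real_sqrt_mult real_sqrt_abs)
    then have "\<bar>u / sqrt \<bar>v\<bar>\<bar> = sqrt (\<bar>Xi a b c\<bar> / \<bar>Lam0\<bar>)"
      using unz Lam0 Xi_nz by (simp add: real_sqrt_divide abs_mult)
    then have "nh_phi h3 h4 a b c = ln (sqrt (\<bar>Xi a b c\<bar> / \<bar>Lam0\<bar>))"
      unfolding nh_phi_def using h3d[of a b c] by (simp add: u_def v_def)
    also have "\<dots> = (ln \<bar>Xi a b c\<bar> - ln \<bar>Lam0\<bar>) / 2"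
      using Lam0 Xi_nz by (simp add: ln_sqrt ln_div)
    also have "\<dots> = ln ((Xi a b c)\<^sup>2) / 4 - ln \<bar>Lam0\<bar> / 2"
      by (simp add: ln_abs_sq[of "Xi a b c"])
    finally show "nh_phi h3 h4 a b c = ln ((Xi a b c)\<^sup>2) / 4 - ln \<bar>Lam0\<bar> / 2" .
  qed
  have phi4: "pd4 (nh_phi h3 h4) a b c = pd4 Xi a b c / (2 * Xi a b c)" for a b c
  proof -
    have "((\<lambda>t. ln ((Xi a b t)\<^sup>2) / 4 - ln \<bar>Lam0\<bar> / 2) has_real_derivative
            (2 * pd4 Xi a b c / Xi a b c) / 4 - 0) (at c)"
      by (intro DERIV_diff DERIV_cdivide ln_sq_deriv dX Xi_nz[rule_format] DERIV_const)
    then show ?thesis unfolding phi_eq pd4_def by (simp add: DERIV_imp_deriv pd4_def)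
  qed
  have phix: "pdx i (nh_phi h3 h4) a b c = pdx i Xi a b c / (2 * Xi a b c)" for i a b c
  proof (cases "i = 1")
    case True
    have "((\<lambda>t. ln ((Xi t b c)\<^sup>2) / 4 - ln \<bar>Lam0\<bar> / 2) has_real_derivative
            (2 * pd1 Xi a b c / Xi a b c) / 4 - 0) (at a)"
      by (intro DERIV_diff DERIV_cdivide ln_sq_deriv dX1 Xi_nz[rule_format] DERIV_const)
    then show ?thesis using True unfolding phi_eq pdx_def pd1_def by (simp add: DERIV_imp_deriv pd1_def)
  next
    case False
    have "((\<lambda>t. ln ((Xi a t c)\<^sup>2) / 4 - ln \<bar>Lam0\<bar> / 2) has_real_derivative
            (2 * pd2 Xi a b c / Xi a b c) / 4 - 0) (at b)"
      by (intro DERIV_diff DERIV_cdivide ln_sq_deriv dX2 Xi_nz[rule_format] DERIV_const)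
    then show ?thesis using False unfolding phi_eq pdx_def pd2_def by (simp add: DERIV_imp_deriv pd2_def)
  qed
  have lnabs: "\<And>x::real. ln \<bar>x\<bar> = ln x"
    by (metis abs_of_nonneg abs_of_nonpos ln_minus linear)
  have P1nz: "\<And>a b c. pd4 Phi a b c \<noteq> 0" using Phi_d4 by blast
  have Xnz: "\<And>a b c. Xi a b c \<noteq> 0" using Xi_nz by blast
  have gam: "nh_gamma h3 h4 a b c = 3 * pd4 Phi a b c / Phi a b c
      - 2 * pd4 (pd4 Phi) a b c / pd4 Phi a b c + pd4 Xi a b c / Xi a b c" for a b c
  proof -
    have geq: "(\<lambda>a b c. ln (\<bar>h3 a b c\<bar> powr (3/2) / \<bar>h4 a b c\<bar>)) =
      (\<lambda>a b c. 3/2 * ln ((Phi a b c)\<^sup>2) - 3/2 * ln (4 * Lam0) - ln ((pd4 Phi a b c)\<^sup>2)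
         + ln ((Xi a b c)\<^sup>2) / 2)"
    proof (intro ext)
      fix a b c
      have "ln (\<bar>h3 a b c\<bar> powr (3/2) / \<bar>h4 a b c\<bar>) = 3/2 * ln (h3 a b c) - ln (h4 a b c)"
      proof -
        have "h3 a b c \<noteq> 0" "h4 a b c \<noteq> 0"
          using Pnz[of a b c] P1nz[of a b c] Xnz[of a b c] Lam0 by (simp_all add: h3_def h4_def)
        then have "ln (\<bar>h3 a b c\<bar> powr (3/2) / \<bar>h4 a b c\<bar>) = ln (\<bar>h3 a b c\<bar> powr (3/2)) - ln \<bar>h4 a b c\<bar>"
          by (simp add: ln_div)
        then show ?thesis by (simp add: lnabs)
      qed
      also have "\<dots> = 3/2 * ln ((Phi a b c)\<^sup>2) - 3/2 * ln (4 * Lam0) - ln ((pd4 Phi a b c)\<^sup>2)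
         + ln ((Xi a b c)\<^sup>2) / 2"
        using Pnz[of a b c] P1nz[of a b c] Xnz[of a b c] Lam0
        by (simp add: ln_div h3_def h4_def ln_abs_sq[symmetric] lnabs algebra_simps)
      finally show "ln (\<bar>h3 a b c\<bar> powr (3/2) / \<bar>h4 a b c\<bar>) = 3/2 * ln ((Phi a b c)\<^sup>2) - 3/2 * ln (4 * Lam0) - ln ((pd4 Phi a b c)\<^sup>2)
         + ln ((Xi a b c)\<^sup>2) / 2" .
    qed
    have "((\<lambda>t. 3/2 * ln ((Phi a b t)\<^sup>2) - 3/2 * ln (4 * Lam0) - ln ((pd4 Phi a b t)\<^sup>2)
         + ln ((Xi a b t)\<^sup>2) / 2) has_real_derivative
         3/2 * (2 * pd4 Phi a b c / Phi a b c) - 0 - 2 * pd4 (pd4 Phi) a b c / pd4 Phi a b c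
          + (2 * pd4 Xi a b c / Xi a b c) / 2) (at c)"
      by (intro DERIV_add DERIV_diff DERIV_cmult DERIV_cdivide ln_sq_deriv dX dP dP1 Pnz P1nz Xnz DERIV_const)
    then show ?thesis unfolding nh_gamma_def geq pd4_def by (simp add: DERIV_imp_deriv pd4_def)
  qed
  define Q where "Q = (\<lambda>a b c. (pd4 Phi a b c)\<^sup>2 / ((Phi a b c) ^ 3 * Xi a b c))"
  have nd: "pd4 (\<lambda>a b c. n1 k a b + n2 k a b * A a b c) = (\<lambda>a b c. n2 k a b * Q a b c)" for k
  proof (intro ext)
    fix a b c
    have "((\<lambda>t. n1 k a b + n2 k a b * A a b t) has_real_derivative 0 + n2 k a b * Q a b c) (at c)"
      unfolding Q_def using A_antider by (intro DERIV_add DERIV_cmult DERIV_const) auto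
    then show "pd4 (\<lambda>a b c. n1 k a b + n2 k a b * A a b c) a b c = n2 k a b * Q a b c"
      unfolding pd4_def by (simp add: DERIV_imp_deriv)
  qed
  have ndd: "pd4 (\<lambda>a b c. n2 k a b * Q a b c) a b c = n2 k a b *
     ((2 * pd4 Phi a b c * pd4 (pd4 Phi) a b c * ((Phi a b c) ^ 3 * Xi a b c)
       - (pd4 Phi a b c)\<^sup>2 * (3 * (Phi a b c)\<^sup>2 * pd4 Phi a b c * Xi a b c + (Phi a b c)^3 * pd4 Xi a b c))
      / (((Phi a b c) ^ 3 * Xi a b c) * ((Phi a b c) ^ 3 * Xi a b c)))" for k a b c
  proof -
    have "((\<lambda>t. Q a b t) has_real_derivative
      ((2 * pd4 Phi a b c ^ 1 * pd4 (pd4 Phi) a b c) * ((Phi a b c) ^ 3 * Xi a b c)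
       - (pd4 Phi a b c)\<^sup>2 * ((3 * (Phi a b c) ^ 2 * pd4 Phi a b c) * Xi a b c + (Phi a b c)^3 * pd4 Xi a b c))
      / (((Phi a b c) ^ 3 * Xi a b c) * ((Phi a b c) ^ 3 * Xi a b c))) (at c)"
      using DERIV_divide[OF DERIV_power[OF dP1[of a b c], of 2]
               DERIV_mult[OF DERIV_power[OF dP[of a b c], of 3] dX[of a b c]]] Pnz[of a b c] Xnz[of a b c]
      unfolding Q_def by (simp add: mult_ac)
    then have "((\<lambda>t. n2 k a b * Q a b t) has_real_derivative n2 k a b *
     ((2 * pd4 Phi a b c * pd4 (pd4 Phi) a b c * ((Phi a b c) ^ 3 * Xi a b c)
       - (pd4 Phi a b c)\<^sup>2 * (3 * (Phi a b c)\<^sup>2 * pd4 Phi a b c * Xi a b c + (Phi a b c)^3 * pd4 Xi a b c))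
      / (((Phi a b c) ^ 3 * Xi a b c) * ((Phi a b c) ^ 3 * Xi a b c)))) (at c)"
      by (intro DERIV_cmult) (simp add: mult_ac)
    then show ?thesis unfolding pd4_def by (simp add: DERIV_imp_deriv)
  qed
  have "decoupled_system eps1 eps2 Lam vLam psi h3 h4
           (\<lambda>k a b c. n1 k a b + n2 k a b * A a b c)
           (\<lambda>i a b c. pdx i Xi a b c / pd4 Xi a b c)"
    unfolding decoupled_system_def
  proof (intro conjI ballI allI)
    show "eps1 * deriv (\<lambda>t. deriv (\<lambda>s. psi s b) t) a
            + eps2 * deriv (\<lambda>t. deriv (\<lambda>s. psi a s) t) b = 2 * Lam a b" for a b
      using psi_sol by blast
  next
    fix a b c
    show "pd4 (nh_phi h3 h4) a b c * pd4 h3 a b c = 2 * h3 a b c * h4 a b c * vLam a b c"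
      unfolding phi4 h3d using Xi_eq[rule_format, of a b c] Phi2d[of a b c] Xnz[of a b c] Lam0
      by (simp add: h3_def h4_def field_simps power2_eq_square)
  next
    fix i a b c
    show "pd4 (pd4 (\<lambda>a b c. n1 i a b + n2 i a b * A a b c)) a b c
        + nh_gamma h3 h4 a b c * pd4 (\<lambda>a b c. n1 i a b + n2 i a b * A a b c) a b c = 0"
      unfolding nd ndd gam using Pnz[of a b c] P1nz[of a b c] Xnz[of a b c]
      by (simp add: Q_def field_simps power2_eq_square eval_nat_numeral)
  next
    fix i a b c
    show "nh_beta h3 h4 a b c * (pdx i Xi a b c / pd4 Xi a b c) - nh_alpha h3 h4 i a b c = 0"
      unfolding nh_beta_def nh_alpha_def phi4 phix using Xnz[of a b c] Xi_d4
      by (simp add: field_simps)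
  qed
  then show ?thesis by (simp add: h3_def h4_def)
qed

end
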